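(* Let $\mathcal{I}$ be the input model and let $\mathbf{P}$ (protocol) and $\mathbf{T}$ (task) be action models with proper partial epistemic frames. If there exists a guarded positive epistemic formula $\varphi$ such that $\mathcal{I}[\![\mathbf{T}]\!]\models\varphi$ but $\mathcal{I}[\![\mathbf{P}]\!]\not\models\varphi$, then the task $\mathbf{T}$ is not solvable by the protocol $\mathbf{P}$.
   Context: Agents $\mathsf{Ag}=\{0,\dots,n-1\}$, $n>1$; $\mathsf{Value}=\mathsf{Ag}$; atomic propositions $\mathsf{At}=\bigcup_a\mathsf{At}_a$ with $\mathsf{At}_a=\{\mathrm{input}_a^v\mid v\in\mathsf{Value}\}$; $\mathsf{At}_B=\bigcup_{a\in B}\mathsf{At}_a$. Epistemic formulas: $\varphi::=p\mid\neg\varphi\mid\varphi\wedge\varphi\mid\varphi\vee\varphi\mid K_a\varphi$. Let $\mathsf{false}=p\wedge\neg p$, $\mathrm{alive}(a)=\neg K_a\mathsf{false}$, $\mathrm{alive}(B)=\bigwedge_{a\in B}\mathrm{alive}(a)$. Guarded positive formulas: $\varphi::=(\mathrm{alive}(B)\Rightarrow\psi)\mid\varphi\wedge\varphi\mid\varphi\vee\varphi\mid K_a\varphi$ ($B\subseteq\mathsf{Ag}$), where $\psi$ is a propositional formula (built with $\neg,\wedge,\vee$) over atoms in $\mathsf{At}_B$. A partial epistemic model $\langle W,\sim,L\rangle$: $W$ nonempty finite, each $\sim_a$ a partial equivalence relation (symmetric, transitive), $L:W\to\mathcal{P}(\mathsf{At})$; $\mathrm{Alive}(w)=\{a\mid w\sim_a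 w\}$; $w\sim_A w'$ means $w\sim_a w'$ for all $a\in A$; proper means $w\ne w'$ implies $w\not\sim_a w'$ for some $a$. Satisfaction: $p$ true at $w$ iff $p\in L(w)$; Booleans as usual; $K_a\varphi$ true at $w$ iff $\varphi$ true at all $w'$ with $w\sim_aw'$; $\mathcal{M}\models\varphi$ means true at every world. Input model $\mathcal{I}$: worlds are the sets $X=\{(0,v_0),\dots,(n-1,v_{n-1})\}$ with $v_i\in\mathsf{Value}$; $X\sim_aY$ iff $X$ and $Y$ contain the same vertex of the form $(a,v)$; $L(X)=\{\mathrm{input}_a^v\mid (a,v)\in X\}$. An action model $\langle T,\sim,\mathsf{pre}\rangle$: a partial epistemic frame $\langle T,\sim\rangle$ plus $\mathsf{pre}$ mapping actions to formulas; $\mathrm{Alive}(t)=\{a\mid t\sim_at\}$. Partial product update $\mathcal{I}[\![\mathbf{A}]\!]$: with $\langle X\rangle_t=\{Y\mid X\sim^{\mathcal{I}}_{\mathrm{Alive}(t)}Y,\ \mathcal{I},Y\models\mathsf{pre}(t)\}$, worlds are $(\langle X\rangle_t,t)$ with $\mathrm{Alive}(t)\subseteq\mathrm{Alive}(X)$ and $\mathcal{I},X\models\mathsf{pre}(t)$; $(\langle X\rangle_t,t)\sim_a(\langle Y\rangle_s,s)$ iff $X\sim^{\mathcal{I}}_aY$ and $t\sim_as$; label $\bigcap_{X'\in\langle X\rangle_t}L(X')$. A morphism $f:\langle W,\sim,L\rangle\to\langle W',\sim',L'\rangle$ is a map $f:W\to\mathcal{P}(W')$ such that (i) $w\sim_a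 w'$ implies $u\sim'_au'$ for all $u\in f(w)$, $u'\in f(w')$; (ii) for each $w$ there is $w'\in f(w)$ with $f(w)=\{u\in W'\mid w'\sim'_{\mathrm{Alive}(w)}u\}$; (iii) for $w\in W$, $w'\in f(w)$: $L(w)\cap\mathsf{At}_{\mathrm{Alive}(w)}=L'(w')\cap\mathsf{At}_{\mathrm{Alive}(w)}$. The task $\mathbf{T}$ is solvable by $\mathbf{P}$ if there is a morphism $\delta:\mathcal{I}[\![\mathbf{P}]\!]\to\mathcal{I}[\![\mathbf{T}]\!]$ such that for every world $(E,p)$ of $\mathcal{I}[\![\mathbf{P}]\!]$ there is $(E',t)\in\delta((E,p))$ with $E\subseteq E'$. *)

theory Defs
  imports Main
begin

text \<open>Agents and values are natural numbers below n. The atom input_a^v is Atom (a,v).\<close>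

datatype fm = Atom "nat \<times> nat" | Neg fm | Conj fm fm | Disj fm fm | K nat fm

record 'w pem =
  worlds :: "'w set"
  rel :: "nat \<Rightarrow> 'w \<Rightarrow> 'w \<Rightarrow> bool"
  lab :: "'w \<Rightarrow> (nat \<times> nat) set"

fun sat :: "'w pem \<Rightarrow> 'w \<Rightarrow> fm \<Rightarrow> bool" where
  "sat M w (Atom p) = (p \<in> lab M w)"
| "sat M w (Neg f) = (\<not> sat M w f)"
| "sat M w (Conj f g) = (sat M w f \<and> sat M w g)"
| "sat M w (Disj f g) = (sat M w f \<or> sat M w g)"
| "sat M w (K a f) = (\<forall>w'\<in>worlds M. rel M a w w' \<longrightarrow> sat M w' f)"

definition models :: "'w pem \<Rightarrow> fm \<Rightarrow> bool" where
  "models M f = (\<forall>w\<in>worlds M. sat M w f)"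

definition falsefm :: fm where "falsefm = Conj (Atom (0,0)) (Neg (Atom (0,0)))"

definition alivefm :: "nat \<Rightarrow> fm" where "alivefm a = Neg (K a falsefm)"

fun alive_list :: "nat list \<Rightarrow> fm" where
  "alive_list [] = Neg falsefm"
| "alive_list (a # as) = Conj (alivefm a) (alive_list as)"

definition impl :: "fm \<Rightarrow> fm \<Rightarrow> fm" where "impl f g = Disj (Neg f) g"

inductive prop_over :: "nat \<Rightarrow> nat set \<Rightarrow> fm \<Rightarrow> bool" for n B where
  "a \<in> B \<Longrightarrow> v < n \<Longrightarrow> prop_over n B (Atom (a, v))"
| "prop_over n B f \<Longrightarrow> prop_over n B (Neg f)"
| "prop_over n B f \<Longrightarrow> prop_over n B g \<Longrightarrow> prop_over n B (Conj f g)"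
| "prop_over n B f \<Longrightarrow> prop_over n B g \<Longrightarrow> prop_over n B (Disj f g)"

text \<open>Guarded positive formulas; alive(B) is the conjunction over a list enumerating B.\<close>
inductive gpos :: "nat \<Rightarrow> fm \<Rightarrow> bool" for n where
  "set Bs \<subseteq> {..<n} \<Longrightarrow> prop_over n (set Bs) psi \<Longrightarrow> gpos n (impl (alive_list Bs) psi)"
| "gpos n f \<Longrightarrow> gpos n g \<Longrightarrow> gpos n (Conj f g)"
| "gpos n f \<Longrightarrow> gpos n g \<Longrightarrow> gpos n (Disj f g)"
| "a < n \<Longrightarrow> gpos n f \<Longrightarrow> gpos n (K a f)"

definition alive_set :: "nat \<Rightarrow> 'w pem \<Rightarrow> 'w \<Rightarrow> nat set" where
  "alive_set n M w = {a. a < n \<and> rel M a w w}"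

definition input_model :: "nat \<Rightarrow> (nat \<times> nat) set pem" where
  "input_model n = \<lparr> worlds = {X. \<exists>v. (\<forall>i<n. v i < n) \<and> X = {(i, v i) | i. i < n}},
     rel = (\<lambda>a X Y. \<exists>v. (a, v) \<in> X \<and> (a, v) \<in> Y),
     lab = (\<lambda>X. X) \<rparr>"

record 't action_model =
  acts :: "'t set"
  arel :: "nat \<Rightarrow> 't \<Rightarrow> 't \<Rightarrow> bool"
  pre :: "'t \<Rightarrow> fm"

definition is_action_model :: "nat \<Rightarrow> 't action_model \<Rightarrow> bool" where
  "is_action_model n A = (acts A \<noteq> {} \<and> finite (acts A) \<and>
     (\<forall>a<n. \<forall>t\<in>acts A. \<forall>s\<in>acts A. arel A a t s \<longrightarrow> arel A a s t) \<and>
     (\<forall>a<n. \<forall>t\<in>acts A. \<forall>s\<in>acts A. \<forall>u\<in>acts A. arel A a t s \<longrightarrow> arel A a s u \<longrightarrow> arel A a t u))"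

definition proper_act :: "nat \<Rightarrow> 't action_model \<Rightarrow> bool" where
  "proper_act n A = (\<forall>t\<in>acts A. \<forall>s\<in>acts A. t \<noteq> s \<longrightarrow> (\<exists>a<n. \<not> arel A a t s))"

definition alive_act :: "nat \<Rightarrow> 't action_model \<Rightarrow> 't \<Rightarrow> nat set" where
  "alive_act n A t = {a. a < n \<and> arel A a t t}"

definition cls :: "nat \<Rightarrow> 't action_model \<Rightarrow> (nat \<times> nat) set \<Rightarrow> 't \<Rightarrow> (nat \<times> nat) set set" where
  "cls n A X t = {Y \<in> worlds (input_model n).
      (\<forall>a\<in>alive_act n A t. rel (input_model n) a X Y) \<and> sat (input_model n) Y (pre A t)}"

definition good_rep :: "nat \<Rightarrow> 't action_model \<Rightarrow> (nat \<times> nat) set \<Rightarrow> 't \<Rightarrow> bool" where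
  "good_rep n A X t = (X \<in> worlds (input_model n) \<and> t \<in> acts A \<and>
      alive_act n A t \<subseteq> alive_set n (input_model n) X \<and> sat (input_model n) X (pre A t))"

definition update :: "nat \<Rightarrow> 't action_model \<Rightarrow> ((nat \<times> nat) set set \<times> 't) pem" where
  "update n A = \<lparr> worlds = {(cls n A X t, t) | X t. good_rep n A X t},
     rel = (\<lambda>a (E, t) (E', s). \<exists>X Y. good_rep n A X t \<and> good_rep n A Y s \<and>
              E = cls n A X t \<and> E' = cls n A Y s \<and>
              rel (input_model n) a X Y \<and> arel A a t s),
     lab = (\<lambda>(E, t). \<Inter>X'\<in>E. lab (input_model n) X') \<rparr>"

definition At_of :: "nat \<Rightarrow> nat set \<Rightarrow> (nat \<times> nat) set" where
  "At_of n B = {(a, v). a \<in> B \<and> v < n}"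

definition morphism :: "nat \<Rightarrow> 'w pem \<Rightarrow> 'v pem \<Rightarrow> ('w \<Rightarrow> 'v set) \<Rightarrow> bool" where
  "morphism n M M' f = (
     (\<forall>w\<in>worlds M. f w \<subseteq> worlds M') \<and>
     (\<forall>a<n. \<forall>w\<in>worlds M. \<forall>w'\<in>worlds M. rel M a w w' \<longrightarrow>
         (\<forall>u\<in>f w. \<forall>u'\<in>f w'. rel M' a u u')) \<and>
     (\<forall>w\<in>worlds M. \<exists>w'\<in>f w.
         f w = {u \<in> worlds M'. \<forall>a\<in>alive_set n M w. rel M' a w' u}) \<and>
     (\<forall>w\<in>worlds M. \<forall>w'\<in>f w.
         lab M w \<inter> At_of n (alive_set n M w) = lab M' w' \<inter> At_of n (alive_set n M w)))"

definition solvable :: "nat \<Rightarrow> 'p action_model \<Rightarrow> 't action_model \<Rightarrow> bool" where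
  "solvable n P T = (\<exists>\<delta>. morphism n (update n P) (update n T) \<delta> \<and>
     (\<forall>(E, p)\<in>worlds (update n P). \<exists>(E', t)\<in>\<delta> (E, p). E \<subseteq> E'))"

end

theory Submission
  imports Defs
begin

lemma sat_falsefm: "\<not> sat M w falsefm"
  by (simp add: falsefm_def)

lemma sat_alive_list: "sat M w (alive_list Bs) = (\<forall>a\<in>set Bs. \<exists>w'\<in>worlds M. rel M a w w')"
  by (induction Bs) (auto simp: alivefm_def sat_falsefm)

lemma prop_over_sat:
  assumes "prop_over n B psi"
    and "lab M w \<inter> At_of n B = lab M' u \<inter> At_of n B"
  shows "sat M w psi = sat M' u psi"
  using assms
proof (induction rule: prop_over.induct)
  case (1 a v)
  then have "(a,v) \<in> At_of n B" by (simp add: At_of_def)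
  then show ?case using 1 by auto
qed auto

lemma At_of_mono: "B \<subseteq> C \<Longrightarrow> At_of n B \<subseteq> At_of n C"
  by (auto simp: At_of_def)

lemma gpos_pres:
  assumes mor: "morphism n M M' f"
    and per: "\<forall>a<n. \<forall>w\<in>worlds M. \<forall>w'\<in>worlds M. rel M a w w' \<longrightarrow> rel M a w w"
  shows "gpos n \<phi> \<Longrightarrow> w \<in> worlds M \<Longrightarrow> u \<in> f w \<Longrightarrow> sat M' u \<phi> \<Longrightarrow> sat M w \<phi>"
proof (induction arbitrary: w u rule: gpos.induct)
  case (1 Bs psi)
  show ?case
  proof (cases "sat M w (alive_list Bs)")
    case False
    then show ?thesis by (simp add: impl_def)
  next
    case True
    have rw: "\<forall>a\<in>set Bs. rel M a w w"
      using True per 1(1,3) by (auto simp: sat_alive_list)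
    have uw: "u \<in> worlds M'" using mor 1 by (auto simp: morphism_def)
    have ru: "\<forall>a\<in>set Bs. rel M' a u u"
      using rw mor 1 by (auto simp: morphism_def)
    have "sat M' u (alive_list Bs)" using ru uw by (auto simp: sat_alive_list)
    then have su: "sat M' u psi" using 1(5) by (simp add: impl_def)
    have sub: "set Bs \<subseteq> alive_set n M w" using rw 1(1) by (auto simp: alive_set_def)
    have "lab M w \<inter> At_of n (alive_set n M w) = lab M' u \<inter> At_of n (alive_set n M w)"
      using mor 1 by (auto simp: morphism_def)
    then have "lab M w \<inter> At_of n (set Bs) = lab M' u \<inter> At_of n (set Bs)"
      using At_of_mono[OF sub, of n] by blast
    then have "sat M w psi = sat M' u psi" by (rule prop_over_sat[OF 1(2)])
    then have "sat M w psi" using su by simp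
    then show ?thesis by (simp add: impl_def)
  qed
next
  case (2 f g) then show ?case by auto
next
  case (3 f g) then show ?case by auto
next
  case (4 a g)
  show ?case
  proof (simp, intro ballI impI)
    fix w' assume w': "w' \<in> worlds M" and r: "rel M a w w'"
    obtain u' where u': "u' \<in> f w'" using mor w' by (auto simp: morphism_def)
    have "rel M' a u u'" using mor 4 w' r u' by (auto simp: morphism_def)
    moreover have "u' \<in> worlds M'" using mor w' u' by (auto simp: morphism_def)
    ultimately have "sat M' u' g" using 4(6) by simp
    then show "sat M w' g" using 4(3)[OF w' u'] by simp
  qed
qed

lemma update_per:
  assumes "is_action_model n A"
  shows "\<forall>a<n. \<forall>w\<in>worlds (update n A). \<forall>w'\<in>worlds (update n A).
           rel (update n A) a w w' \<longrightarrow> rel (update n A) a w w"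
proof (intro allI impI ballI)
  fix a w w' assume a: "a < n" and "w \<in> worlds (update n A)" "w' \<in> worlds (update n A)"
    and r: "rel (update n A) a w w'"
  obtain E t where wd: "w = (E, t)" by (cases w)
  obtain E' s where wd': "w' = (E', s)" by (cases w')
  have "\<exists>X Y. good_rep n A X t \<and> good_rep n A Y s \<and>
              E = cls n A X t \<and> E' = cls n A Y s \<and>
              rel (input_model n) a X Y \<and> arel A a t s"
    using r unfolding update_def wd wd' by simp
  then obtain X Y where g: "good_rep n A X t" "good_rep n A Y s" "E = cls n A X t"
      "rel (input_model n) a X Y" "arel A a t s"
    by blast
  have ts: "t \<in> acts A" "s \<in> acts A" using g(1,2) unfolding good_rep_def by simp_all
  have sy: "\<forall>a<n. \<forall>t\<in>acts A. \<forall>s\<in>acts A. arel A a t s \<longrightarrow> arel A a s t"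
    and tr: "\<forall>a<n. \<forall>t\<in>acts A. \<forall>s\<in>acts A. \<forall>u\<in>acts A. arel A a t s \<longrightarrow> arel A a s u \<longrightarrow> arel A a t u"
    using assms unfolding is_action_model_def by (blast, blast)
  have "arel A a s t" using sy a ts g(5) by blast
  then have "arel A a t t" using tr[rule_format, OF a ts(1) ts(2) ts(1)] g(5) by blast
  moreover have "rel (input_model n) a X X" using g(4) by (auto simp: input_model_def)
  ultimately have "\<exists>X Y. good_rep n A X t \<and> good_rep n A Y t \<and>
              E = cls n A X t \<and> E = cls n A Y t \<and>
              rel (input_model n) a X Y \<and> arel A a t t" using g by blast
  then show "rel (update n A) a w w" unfolding update_def wd by simp
qed

theorem theorem3p6:
  fixes n :: nat and P :: "'p action_model" and T :: "'t action_model" and \<phi> :: fm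
  assumes "n > 1"
    and "is_action_model n P" and "proper_act n P"
    and "is_action_model n T" and "proper_act n T"
    and "gpos n \<phi>"
    and "models (update n T) \<phi>"
    and "\<not> models (update n P) \<phi>"
  shows "\<not> solvable n P T"
proof
  assume "solvable n P T"
  then obtain d where mor: "morphism n (update n P) (update n T) d"
    by (auto simp: solvable_def)
  obtain w where w: "w \<in> worlds (update n P)" "\<not> sat (update n P) w \<phi>"
    using assms(8) by (auto simp: models_def)
  obtain u where u: "u \<in> d w" using mor w by (auto simp: morphism_def)
  have "u \<in> worlds (update n T)" using mor w u by (auto simp: morphism_def)
  then have "sat (update n T) u \<phi>" using assms(7) by (auto simp: models_def)
  then have "sat (update n P) w \<phi>"
    using gpos_pres[OF mor update_per[OF assms(2)] assms(6) w(1) u] by blast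
  then show False using w by simp
qed

end
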